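(* Let $0<c<1/2$. Then $$\sum_{i\in\mathrm{OPT}} w(i)\sum_{B\in\mathcal F(i)} c^{\,1+\mathrm{brank}(i,B)}\le\frac{2c}{1-c}\,w(\mathrm{OPT}).$$
   Context: Let $U$ be a finite ground set with weight function $w:U\to\mathbb{R}_{\ge0}$ taking pairwise distinct values; for $X\subseteq U$, $w(X)=\sum_{x\in X}w(x)$. Let $\mathcal F$ be a laminar family of subsets of $U$ (for any $A,B\in\mathcal F$: $A\subseteq B$, $B\subseteq A$, or $A\cap B=\emptyset$) with $U\in\mathcal F$; each $A\in\mathcal F$ has a positive integer capacity $\mu(A)$, with $\mu(A)<\mu(B)$ whenever $A\subsetneq B$. A set $X\subseteq U$ is independent iff $|X\cap A|\le\mu(A)$ for all $A\in\mathcal F$. For $i\in U$, $\mathcal F(i)$ is the set of all members of $\mathcal F$ containing $i$. For $B\in\mathcal F$, $\mathrm{OPT}(B)$ is the maximum-weight independent subset of $B$, and $\mathrm{OPT}=\mathrm{OPT}(U)$. The backward rank $\mathrm{brank}(i,B)$ is the number of elements of $\mathrm{OPT}(B)$ of weight less than $w(i)$. Standing convention of the paper: by padding $U$ with dummy elements of infinitesimal weight, one assumes $|\mathrm{OPT}(B)|=\mu(B)$ for every $B\in\mathcal F$. *)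

theory Defs
  imports Complex_Main
begin

definition laminar :: "'a set set \<Rightarrow> bool" where
  "laminar F \<longleftrightarrow> (\<forall>A\<in>F. \<forall>B\<in>F. A \<subseteq> B \<or> B \<subseteq> A \<or> A \<inter> B = {})"

definition wt :: "('a \<Rightarrow> real) \<Rightarrow> 'a set \<Rightarrow> real" where
  "wt w X = (\<Sum>x\<in>X. w x)"

definition lam_indep :: "'a set set \<Rightarrow> ('a set \<Rightarrow> nat) \<Rightarrow> 'a set \<Rightarrow> bool" where
  "lam_indep F \<mu> X \<longleftrightarrow> (\<forall>A\<in>F. card (X \<inter> A) \<le> \<mu> A)"

definition is_max_indep ::
  "'a set set \<Rightarrow> ('a set \<Rightarrow> nat) \<Rightarrow> ('a \<Rightarrow> real) \<Rightarrow> 'a set \<Rightarrow> 'a set \<Rightarrow> bool" where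
  "is_max_indep F \<mu> w B X \<longleftrightarrow> X \<subseteq> B \<and> lam_indep F \<mu> X \<and>
     (\<forall>Y. Y \<subseteq> B \<and> lam_indep F \<mu> Y \<longrightarrow> wt w Y \<le> wt w X)"

definition members_containing :: "'a set set \<Rightarrow> 'a \<Rightarrow> 'a set set" where
  "members_containing F i = {A\<in>F. i \<in> A}"

definition brank :: "('a \<Rightarrow> real) \<Rightarrow> ('a set \<Rightarrow> 'a set) \<Rightarrow> 'a \<Rightarrow> 'a set \<Rightarrow> nat" where
  "brank w OPT i B = card {x\<in>OPT B. w x < w i}"

end

theory Submission
  imports Defs
begin


definition FF :: "real \<Rightarrow> nat \<Rightarrow> nat \<Rightarrow> real" where
  "FF c \<nu> a = (1 - c^a) / (1 - c) * (1 + c^(\<nu> - a))"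

lemma FF_0[simp]: "FF c \<nu> 0 = 0" by (simp add: FF_def)

lemma FF_nonneg: assumes "0 < c" "c < 1" shows "FF c \<nu> a \<ge> 0"
proof -
  have "c^a \<le> 1" using assms by (simp add: power_le_one)
  thus ?thesis unfolding FF_def using assms by (intro mult_nonneg_nonneg divide_nonneg_pos) auto
qed

lemma FF_subadd:
  assumes c: "0 < c" "c < 1" and le: "a + b \<le> \<nu>"
  shows "FF c \<nu> (a + b) \<le> FF c \<nu> a + FF c \<nu> b"
proof -
  obtain d where d: "\<nu> = a + b + d" using le le_Suc_ex by blast
  define p where "p = c^a" define q where "q = c^b" define r where "r = c^d"
  have p: "0 \<le> p" "p \<le> 1" unfolding p_def using c by (auto simp: power_le_one)
  have q: "0 \<le> q" "q \<le> 1" unfolding q_def using c by (auto simp: power_le_one)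
  have r: "0 \<le> r" "r \<le> 1" unfolding r_def using c by (auto simp: power_le_one)
  have e1: "FF c \<nu> (a+b) = (1 - p*q)/(1-c) * (1 + r)"
    unfolding FF_def p_def q_def r_def d by (simp add: power_add)
  have e2: "FF c \<nu> a = (1 - p)/(1-c) * (1 + q*r)"
    unfolding FF_def p_def q_def r_def d by (simp add: power_add)
  have e3: "FF c \<nu> b = (1 - q)/(1-c) * (1 + p*r)"
    unfolding FF_def p_def q_def r_def d by (simp add: power_add add.commute add.left_commute)
  have key: "(1 - p*q) * (1 + r) \<le> (1 - p) * (1 + q*r) + (1 - q) * (1 + p*r)"
  proof -
    have "0 \<le> (1-p)*(1-q)*(1-r)" using p q r by (intro mult_nonneg_nonneg) auto
    thus ?thesis by (simp add: algebra_simps)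
  qed
  have "(1 - p*q)/(1-c) * (1 + r) \<le> (1 - p)/(1-c) * (1 + q*r) + (1 - q)/(1-c) * (1 + p*r)"
    using key c by (simp add: divide_simps)
  thus ?thesis using e1 e2 e3 by simp
qed

lemma FF_le_2: assumes c: "0 < c" "c < 1" and "e \<le> \<nu>" shows "FF c \<nu> e \<le> 2 * e"
proof -
  have h: "(\<Sum>k<e. c^k) = (1 - c^e)/(1-c)" using c by (simp add: sum_gp_strict)
  have "(\<Sum>k<e. c^k) \<le> (\<Sum>k<e. (1::real))" using c by (intro sum_mono) (simp add: power_le_one)
  hence h2: "(1 - c^e)/(1-c) \<le> e" using h by simp
  have "c^(\<nu>-e) \<le> 1" using c by (simp add: power_le_one)
  have h3: "0 \<le> (1 - c^e)/(1-c)" using c by (simp add: power_le_one)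
  have "FF c \<nu> e = (1 - c^e)/(1-c) * (1 + c^(\<nu>-e))" by (simp add: FF_def)
  also have "\<dots> \<le> real e * 2"
    using h2 h3 \<open>c^(\<nu>-e) \<le> 1\<close> c by (intro mult_mono) auto
  finally show ?thesis by simp
qed

lemma FF_mono_nu: assumes c: "0 < c" "c < 1" and "a \<le> \<nu>" "\<nu> \<le> \<nu>'" shows "FF c \<nu>' a \<le> FF c \<nu> a"
proof -
  have h3: "0 \<le> (1 - c^a)/(1-c)" using c by (simp add: power_le_one)
  have "c^(\<nu>'-a) \<le> c^(\<nu>-a)" using c assms by (intro power_decreasing) auto
  thus ?thesis unfolding FF_def using h3 by (intro mult_left_mono) auto
qed

lemma FF_diff: assumes c: "0 < c" "c < 1" and "a \<le> \<nu>"
  shows "FF c \<nu> a - FF c (Suc \<nu>) a = c^(\<nu> - a) * (1 - c^a)"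
proof -
  have "Suc \<nu> - a = Suc (\<nu> - a)" using assms by simp
  hence e: "c^(Suc \<nu> - a) = c * c^(\<nu>-a)" by simp
  have "FF c \<nu> a - FF c (Suc \<nu>) a = (1 - c^a)/(1-c) * ((1 + c^(\<nu>-a)) - (1 + c * c^(\<nu>-a)))"
    unfolding FF_def e by (simp only: right_diff_distrib)
  also have "\<dots> = (1 - c^a)/(1-c) * ((1-c) * c^(\<nu>-a))" by (simp add: algebra_simps)
  also have "\<dots> = c^(\<nu> - a) * (1 - c^a)" using c by simp
  finally show ?thesis .
qed

lemma FF_sum:
  assumes c: "0 < c" "c < 1" and fin: "finite S" and le: "sum f S \<le> \<nu>"
  shows "FF c \<nu> (sum f S) \<le> (\<Sum>x\<in>S. FF c \<nu> (f x))"
  using fin le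
proof (induction S rule: finite_induct)
  case empty then show ?case by simp
next
  case (insert x S)
  have "sum f (insert x S) = f x + sum f S" using insert by simp
  hence "FF c \<nu> (sum f (insert x S)) \<le> FF c \<nu> (f x) + FF c \<nu> (sum f S)"
    using FF_subadd[OF c, of "f x" "sum f S" \<nu>] insert.prems by simp
  also have "\<dots> \<le> FF c \<nu> (f x) + (\<Sum>x\<in>S. FF c \<nu> (f x))"
    using insert by simp
  finally show ?case using insert by simp
qed

lemma FF_step:
  assumes c: "0 < c" "c < 1" and fin: "finite S" and le: "sum f S \<le> t" and t: "t \<le> \<nu>"
  shows "FF c \<nu> t \<le> 2 * (real t - real (sum f S)) + (\<Sum>x\<in>S. FF c \<nu> (f x))"
proof -
  obtain e where e: "t = sum f S + e" using le le_Suc_ex by blast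
  have "FF c \<nu> t \<le> FF c \<nu> (sum f S) + FF c \<nu> e" using FF_subadd[OF c] e t by simp
  also have "\<dots> \<le> (\<Sum>x\<in>S. FF c \<nu> (f x)) + 2 * e"
    using FF_sum[OF c fin, of f \<nu>] FF_le_2[OF c, of e \<nu>] e t by simp
  finally show ?thesis using e by simp
qed




lemma abel:
  fixes w a :: "'a \<Rightarrow> real" and K :: real
  assumes "finite S" "inj_on w S" "\<forall>x\<in>S. w x \<ge> 0"
    "\<forall>\<theta>. (\<Sum>i\<in>{i\<in>S. w i \<ge> \<theta>}. a i) \<le> K * card {i\<in>S. w i \<ge> \<theta>}"
  shows "(\<Sum>i\<in>S. w i * a i) \<le> K * (\<Sum>i\<in>S. w i)"
  using assms
proof (induction "card S" arbitrary: S w rule: less_induct)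
  case less
  show ?case
  proof (cases "S = {}")
    case True then show ?thesis by simp
  next
    case False
    note fin = \<open>finite S\<close>
    obtain m where m: "m \<in> S" "\<forall>x\<in>S. w m \<le> w x"
      using fin False by (metis (no_types, lifting) arg_min_if_finite(1) arg_min_if_finite(2) not_le less_le_not_le)
    define S' where "S' = S - {m}"
    define w' where "w' = (\<lambda>i. w i - w m)"
    have finS': "finite S'" using fin S'_def by simp
    have cardS': "card S' < card S" using m fin unfolding S'_def by (meson card_Diff1_less)
    have all: "{i\<in>S. w i \<ge> w m} = S" using m by auto
    have sumS: "(\<Sum>i\<in>S. a i) \<le> K * card S" using less.prems(4) spec[of _ "w m"] all by metis
    have inj': "inj_on w' S'" using less.prems(2) unfolding w'_def S'_def inj_on_def by auto
    have nn': "\<forall>x\<in>S'. w' x \<ge> 0" using m unfolding w'_def S'_def by auto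
    have hyp': "\<forall>\<theta>. (\<Sum>i\<in>{i\<in>S'. w' i \<ge> \<theta>}. a i) \<le> K * card {i\<in>S'. w' i \<ge> \<theta>}"
    proof
      fix \<theta>
      show "(\<Sum>i\<in>{i\<in>S'. w' i \<ge> \<theta>}. a i) \<le> K * card {i\<in>S'. w' i \<ge> \<theta>}"
      proof (cases "\<theta> > 0")
        case True
        have "{i\<in>S'. w' i \<ge> \<theta>} = {i\<in>S. w i \<ge> \<theta> + w m}"
          using True unfolding S'_def w'_def by auto
        then show ?thesis using less.prems(4) by metis
      next
        case False
        have e1: "{i\<in>S'. w' i \<ge> \<theta>} = S'" using False m unfolding S'_def w'_def by auto
        show ?thesis
        proof (cases "S' = {}")
          case True then show ?thesis by simp
        next
          case False
          obtain m2 where m2: "m2 \<in> S'" "\<forall>x\<in>S'. w m2 \<le> w x"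
            using finS' False by (metis (no_types, lifting) arg_min_if_finite(1) arg_min_if_finite(2) not_le less_le_not_le)
          have "w m < w m2"
          proof -
            have "m2 \<in> S" "m2 \<noteq> m" using m2 unfolding S'_def by auto
            hence "w m2 \<noteq> w m" using less.prems(2) m(1) unfolding inj_on_def by metis
            thus ?thesis using m \<open>m2 \<in> S\<close> by force
          qed
          hence "{i\<in>S. w i \<ge> w m2} = S'" using m2 unfolding S'_def by force
          then show ?thesis using e1 less.prems(4) by metis
        qed
      qed
    qed
    have IH: "(\<Sum>i\<in>S'. w' i * a i) \<le> K * (\<Sum>i\<in>S'. w' i)"
      using less.hyps[OF cardS' finS' inj' nn' hyp'] .
    have d1: "(\<Sum>i\<in>S. w i * a i) = w m * (\<Sum>i\<in>S. a i) + (\<Sum>i\<in>S'. w' i * a i)"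
    proof -
      have "(\<Sum>i\<in>S. w i * a i) = (\<Sum>i\<in>S. w m * a i + w' i * a i)"
        unfolding w'_def by (simp add: algebra_simps)
      also have "\<dots> = w m * (\<Sum>i\<in>S. a i) + (\<Sum>i\<in>S. w' i * a i)"
        by (simp add: sum.distrib sum_distrib_left)
      also have "(\<Sum>i\<in>S. w' i * a i) = (\<Sum>i\<in>S'. w' i * a i)"
        unfolding S'_def using fin m by (simp add: sum.remove w'_def)
      finally show ?thesis .
    qed
    have d2: "(\<Sum>i\<in>S. w i) = w m * card S + (\<Sum>i\<in>S'. w' i)"
    proof -
      have "(\<Sum>i\<in>S. w i) = (\<Sum>i\<in>S. w m + w' i)" unfolding w'_def by simp
      also have "\<dots> = w m * card S + (\<Sum>i\<in>S. w' i)" by (simp add: sum.distrib)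
      also have "(\<Sum>i\<in>S. w' i) = (\<Sum>i\<in>S'. w' i)"
        unfolding S'_def using fin m by (simp add: sum.remove w'_def)
      finally show ?thesis .
    qed
    have "w m * (\<Sum>i\<in>S. a i) \<le> w m * (K * card S)"
      using sumS less.prems(3) m(1) by (intro mult_left_mono) auto
    then show ?thesis using d1 d2 IH by (simp add: algebra_simps)
  qed
qed




locale lam =
  fixes U :: "'a set" and F :: "'a set set" and \<mu> :: "'a set \<Rightarrow> nat"
  assumes finU: "finite U" and F_sub: "\<forall>A\<in>F. A \<subseteq> U" and F_lam: "laminar F"
begin

lemma ex_max_card: "finite C \<Longrightarrow> C \<noteq> {} \<Longrightarrow> \<exists>A\<in>C. \<forall>B\<in>C. f B \<le> (f A::nat)"
proof -
  assume h: "finite C" "C \<noteq> {}"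
  have "Max (f ` C) \<in> f ` C" using h by simp
  then obtain A where A: "A \<in> C" "f A = Max (f ` C)" by force
  have "\<forall>B\<in>C. f B \<le> f A" using A h by simp
  thus ?thesis using A by blast
qed

abbreviation indep where "indep X \<equiv> lam_indep F \<mu> X"

lemma finF: "finite F"
proof -
  have "F \<subseteq> Pow U" using F_sub by auto
  thus ?thesis using finU finite_subset by blast
qed

lemma finA: "A \<in> F \<Longrightarrow> finite A" using F_sub finU finite_subset by blast

lemma lamD: "A \<in> F \<Longrightarrow> B \<in> F \<Longrightarrow> A \<subseteq> B \<or> B \<subseteq> A \<or> A \<inter> B = {}"
  using F_lam unfolding laminar_def by blast

lemma indep_subset: "indep J \<Longrightarrow> I \<subseteq> J \<Longrightarrow> indep I"
  unfolding lam_indep_def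
proof (intro ballI)
  fix A assume h: "\<forall>A\<in>F. card (J \<inter> A) \<le> \<mu> A" "I \<subseteq> J" "A \<in> F"
  have "card (I \<inter> A) \<le> card (J \<inter> A)" using h finA[of A] by (intro card_mono) auto
  thus "card (I \<inter> A) \<le> \<mu> A" using h by fastforce
qed

lemma not_indep_insert:
  assumes "indep I" "\<not> indep (insert x I)" "x \<notin> I"
  shows "\<exists>A\<in>F. x \<in> A \<and> card (I \<inter> A) = \<mu> A"
proof -
  obtain A where A: "A \<in> F" "card (insert x I \<inter> A) > \<mu> A" using assms(2) unfolding lam_indep_def by force
  have le: "card (I \<inter> A) \<le> \<mu> A" using assms(1) A(1) unfolding lam_indep_def by auto
  have xA: "x \<in> A"
  proof (rule ccontr)
    assume "x \<notin> A" hence "insert x I \<inter> A = I \<inter> A" by auto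
    thus False using A le by simp
  qed
  have "insert x I \<inter> A = insert x (I \<inter> A)" using xA by auto
  hence "card (insert x I \<inter> A) = Suc (card (I \<inter> A))" using assms(3) finA[OF A(1)] by simp
  thus ?thesis using A le xA by auto
qed

lemma augment:
  assumes IU: "I \<subseteq> U" and JU: "J \<subseteq> U" and iI: "indep I" and iJ: "indep J" and lt: "card I < card J"
  shows "\<exists>x\<in>J - I. indep (insert x I)"
proof (rule ccontr)
  assume H: "\<not> (\<exists>x\<in>J - I. indep (insert x I))"
  define Tg where "Tg = {A\<in>F. card (I \<inter> A) = \<mu> A \<and> A \<inter> (J - I) \<noteq> {}}"
  define M where "M = {A\<in>Tg. \<forall>A'\<in>Tg. A \<subseteq> A' \<longrightarrow> A' = A}"
  have finTg: "finite Tg" using finF unfolding Tg_def by simp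
  have finM: "finite M" using finTg unfolding M_def by simp
  have MF: "M \<subseteq> F" unfolding M_def Tg_def by auto
  have cover: "\<forall>x\<in>J - I. \<exists>A\<in>M. x \<in> A"
  proof
    fix x assume x: "x \<in> J - I"
    obtain A0 where A0: "A0 \<in> F" "x \<in> A0" "card (I \<inter> A0) = \<mu> A0"
      using not_indep_insert[OF iI] H x by blast
    define Cx where "Cx = {A\<in>Tg. x \<in> A}"
    have A0C: "A0 \<in> Cx" using A0 x unfolding Cx_def Tg_def by auto
    have finCx: "finite Cx" using finTg unfolding Cx_def by simp
    obtain A where A: "A \<in> Cx" "\<forall>B\<in>Cx. card B \<le> card A"
      using ex_max_card[OF finCx, of card] A0C by blast
    have "A \<in> M"
      unfolding M_def
    proof (intro CollectI conjI ballI impI)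
      show "A \<in> Tg" using A unfolding Cx_def by auto
    next
      fix A' assume "A' \<in> Tg" "A \<subseteq> A'"
      hence "A' \<in> Cx" using A unfolding Cx_def by auto
      hence "card A' \<le> card A" using A by auto
      moreover have "finite A'" using \<open>A' \<in> Tg\<close> finA unfolding Tg_def by auto
      ultimately show "A' = A" using \<open>A \<subseteq> A'\<close> card_seteq by blast
    qed
    thus "\<exists>A\<in>M. x \<in> A" using A unfolding Cx_def by auto
  qed
  have disj: "\<forall>A\<in>M. \<forall>B\<in>M. A \<noteq> B \<longrightarrow> A \<inter> B = {}"
  proof (intro ballI impI)
    fix A B assume AB: "A \<in> M" "B \<in> M" "A \<noteq> B"
    from lamD[of A B] AB MF consider "A \<subseteq> B" | "B \<subseteq> A" | "A \<inter> B = {}" by blast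
    then show "A \<inter> B = {}"
    proof cases
      case 1 thus ?thesis using AB unfolding M_def by auto
    next
      case 2 thus ?thesis using AB unfolding M_def by auto
    qed
  qed
  define UM where "UM = \<Union>M"
  have cJ: "card (J \<inter> UM) = (\<Sum>A\<in>M. card (J \<inter> A))"
  proof -
    have "J \<inter> UM = (\<Union>A\<in>M. J \<inter> A)" unfolding UM_def by auto
    moreover have "card (\<Union>A\<in>M. J \<inter> A) = (\<Sum>A\<in>M. card (J \<inter> A))"
      using finM disj MF finA by (intro card_UN_disjoint) auto
    ultimately show ?thesis by simp
  qed
  have cI: "card (I \<inter> UM) = (\<Sum>A\<in>M. card (I \<inter> A))"
  proof -
    have "I \<inter> UM = (\<Union>A\<in>M. I \<inter> A)" unfolding UM_def by auto
    moreover have "card (\<Union>A\<in>M. I \<inter> A) = (\<Sum>A\<in>M. card (I \<inter> A))"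
      using finM disj MF finA by (intro card_UN_disjoint) auto
    ultimately show ?thesis by simp
  qed
  have "(\<Sum>A\<in>M. card (J \<inter> A)) \<le> (\<Sum>A\<in>M. card (I \<inter> A))"
  proof (rule sum_mono)
    fix A assume "A \<in> M"
    hence "A \<in> F" "card (I \<inter> A) = \<mu> A" unfolding M_def Tg_def by auto
    thus "card (J \<inter> A) \<le> card (I \<inter> A)" using iJ unfolding lam_indep_def by auto
  qed
  hence le1: "card (J \<inter> UM) \<le> card (I \<inter> UM)" using cI cJ by simp
  have sub: "J - UM \<subseteq> I - UM" using cover unfolding UM_def by blast
  have finI: "finite I" and finJ: "finite J" using IU JU finU finite_subset by auto
  have le2: "card (J - UM) \<le> card (I - UM)" using sub finI by (intro card_mono) auto
  have "card J = card (J \<inter> UM) + card (J - UM)" using finJ by (rule card_Int_Diff)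
  moreover have "card I = card (I \<inter> UM) + card (I - UM)" using finI by (rule card_Int_Diff)
  ultimately show False using le1 le2 lt by linarith
qed

lemma extend:
  assumes "I \<subseteq> U" "J \<subseteq> U" "indep I" "indep J" "card I \<le> card J"
  shows "\<exists>Z. indep Z \<and> I \<subseteq> Z \<and> Z \<subseteq> I \<union> J \<and> card Z = card J"
  using assms
proof (induction "card J - card I" arbitrary: I)
  case 0
  then show ?case by (intro exI[of _ I]) auto
next
  case (Suc n)
  hence lt: "card I < card J" by simp
  obtain x where x: "x \<in> J - I" "indep (insert x I)" using augment[OF Suc.prems(1-4) lt] by blast
  have finI: "finite I" using Suc.prems(1) finU finite_subset by blast
  have c: "card (insert x I) = Suc (card I)" using x finI by simp
  have "\<exists>Z. indep Z \<and> insert x I \<subseteq> Z \<and> Z \<subseteq> insert x I \<union> J \<and> card Z = card J"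
    using Suc.hyps(1)[of "insert x I"] Suc.hyps(2) Suc.prems x c lt by auto
  then obtain Z where "indep Z" "insert x I \<subseteq> Z" "Z \<subseteq> insert x I \<union> J" "card Z = card J" by blast
  thus ?case using x by (intro exI[of _ Z]) auto
qed

lemma maxl:
  assumes "S \<subseteq> U" "I \<subseteq> S" "indep I" "\<forall>y\<in>S - I. \<not> indep (insert y I)" "J \<subseteq> S" "indep J"
  shows "card J \<le> card I"
proof (rule ccontr)
  assume "\<not> card J \<le> card I"
  hence "card I < card J" by simp
  then obtain x where "x \<in> J - I" "indep (insert x I)" using augment[of I J] assms by blast
  thus False using assms by blast
qed

lemma greedy:
  fixes w :: "'a \<Rightarrow> real"
  assumes BF: "B \<in> F" and mx: "is_max_indep F \<mu> w B X" and cX: "card X = \<mu> B"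
    and y: "y \<in> B" "w y \<ge> \<theta>" "y \<notin> X"
  shows "\<not> indep (insert y {x\<in>X. w x \<ge> \<theta>})"
proof
  define X\<theta> where "X\<theta> = {x\<in>X. w x \<ge> \<theta>}"
  define P where "P = insert y X\<theta>"
  assume iP: "indep (insert y {x\<in>X. w x \<ge> \<theta>})"
  hence iP: "indep P" unfolding P_def X\<theta>_def .
  have BU: "B \<subseteq> U" using BF F_sub by auto
  have XB: "X \<subseteq> B" and iX: "indep X" and opt: "\<forall>Y. Y \<subseteq> B \<and> indep Y \<longrightarrow> wt w Y \<le> wt w X"
    using mx unfolding is_max_indep_def by auto
  have finB: "finite B" using finA[OF BF] .
  have finX: "finite X" using XB finB finite_subset by blast
  have finX\<theta>: "finite X\<theta>" using finX unfolding X\<theta>_def by simp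
  have cP: "card P = Suc (card X\<theta>)" unfolding P_def using y finX\<theta> unfolding X\<theta>_def by simp
  have PB: "P \<subseteq> B" unfolding P_def X\<theta>_def using XB y by auto
  show False
  proof (cases "card P \<le> card X")
    case False
    hence "card X\<theta> \<ge> card X" using cP by simp
    moreover have "X\<theta> \<subseteq> X" unfolding X\<theta>_def by auto
    ultimately have "X\<theta> = X" using finX card_seteq by blast
    hence "card (P \<inter> B) = Suc (\<mu> B)" using PB cP cX by (simp add: Int_absorb2)
    moreover have "card (P \<inter> B) \<le> \<mu> B" using iP BF unfolding lam_indep_def by auto
    ultimately show False by simp
  next
    case True
    obtain Z where Z: "indep Z" "P \<subseteq> Z" "Z \<subseteq> P \<union> X" "card Z = card X"
      using extend[of P X] True iP iX PB XB BU by blast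
    have ZB: "Z \<subseteq> B" using Z PB XB by auto
    have le: "wt w Z \<le> wt w X" using opt Z ZB by auto
    have yZ: "y \<in> Z" using Z unfolding P_def by auto
    have Zeq: "Z = insert y (X \<inter> Z)" using Z yZ unfolding P_def X\<theta>_def by auto
    have finZ: "finite Z" using ZB finB finite_subset by blast
    have cXZ: "Suc (card (X \<inter> Z)) = card X"
      using Zeq Z(4) y(3) finZ by (metis card_insert_disjoint finite_Int IntD1)
    have "card X = card (X \<inter> Z) + card (X - Z)" using finX by (rule card_Int_Diff)
    hence "card (X - Z) = 1" using cXZ by simp
    then obtain z where z: "X - Z = {z}" using card_1_singletonE by blast
    have zX: "z \<in> X" "z \<notin> Z" using z by auto
    have "z \<notin> X\<theta>" using zX Z(2) unfolding P_def by auto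
    hence wz: "w z < \<theta>" using zX unfolding X\<theta>_def by auto
    have "wt w X = wt w (X \<inter> Z) + wt w (X - Z)"
      unfolding wt_def using finX by (metis sum.Int_Diff)
    hence e1: "wt w X = wt w (X \<inter> Z) + w z" using z unfolding wt_def by simp
    have "wt w Z = w y + wt w (X \<inter> Z)"
      unfolding wt_def using Zeq finX y(3) by (metis IntE finite_Int sum.insert)
    thus False using e1 le wz y(2) by linarith
  qed
qed

lemma CA:
  fixes w :: "'a \<Rightarrow> real"
  assumes UF: "U \<in> F" and inj: "inj_on w U" and mxU: "is_max_indep F \<mu> w U Opt" and cO: "card Opt = \<mu> U"
    and BF: "B \<in> F" and mxB: "is_max_indep F \<mu> w B X" and cX: "card X = \<mu> B"
    and i: "i \<in> Opt" "i \<in> B"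
  shows "card {x\<in>X. w x \<ge> w i} \<le> card {x\<in>Opt \<inter> B. w x \<ge> w i}"
proof -
  define S where "S = {x\<in>B. w x \<ge> w i}"
  define I where "I = {x\<in>Opt \<inter> B. w x \<ge> w i}"
  define J where "J = {x\<in>X. w x \<ge> w i}"
  have BU: "B \<subseteq> U" using BF F_sub by auto
  have OU: "Opt \<subseteq> U" and iO: "indep Opt" using mxU unfolding is_max_indep_def by auto
  have XB: "X \<subseteq> B" and iX: "indep X" using mxB unfolding is_max_indep_def by auto
  have iI: "indep I" using indep_subset[OF iO] unfolding I_def by auto
  have iJ: "indep J" using indep_subset[OF iX] unfolding J_def by auto
  have nI: "\<forall>y\<in>S - I. \<not> indep (insert y I)"
  proof (intro ballI notI)
    fix y assume yS: "y \<in> S - I" and ins: "indep (insert y I)"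
    have yB: "y \<in> B" and wy: "w y \<ge> w i" using yS unfolding S_def by auto
    have yO: "y \<notin> Opt" using yS yB wy unfolding I_def S_def by auto
    define Uy where "Uy = {x\<in>Opt. w x \<ge> w y}"
    have yU: "y \<in> U" using yB BU by auto
    have ni: "\<not> indep (insert y Uy)" unfolding Uy_def
      using greedy[OF UF mxU cO yU _ yO, of "w y"] by simp
    have iUy: "indep Uy" using indep_subset[OF iO] unfolding Uy_def by auto
    obtain A where A: "A \<in> F" "y \<in> A" "card (Uy \<inter> A) = \<mu> A"
      using not_indep_insert[OF iUy ni] yO unfolding Uy_def by auto
    have finA': "finite A" using finA[OF A(1)] .
    from lamD[OF A(1) BF] consider "A \<subseteq> B" | "B \<subseteq> A" | "A \<inter> B = {}" by blast
    then show False
    proof cases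
      case 1
      have "Uy \<inter> A \<subseteq> I \<inter> A" using 1 wy unfolding Uy_def I_def by auto
      hence "\<mu> A \<le> card (I \<inter> A)" using A finA' by (metis card_mono finite_Int)
      moreover have "insert y I \<inter> A = insert y (I \<inter> A)" using A by auto
      moreover have "y \<notin> I" using yO unfolding I_def by auto
      ultimately have "card (insert y I \<inter> A) > \<mu> A" using finA' by simp
      thus False using ins A(1) unfolding lam_indep_def by fastforce
    next
      case 2
      have iA: "i \<in> A" using 2 i by auto
      have "i \<noteq> y" using i yO by auto
      hence "w i \<noteq> w y" using inj i OU yU unfolding inj_on_def by auto
      hence "w i < w y" using wy by simp
      hence "i \<notin> Uy" unfolding Uy_def by auto
      hence "card (insert i (Uy \<inter> A)) = Suc (\<mu> A)" using A finA' by simp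
      moreover have "insert i (Uy \<inter> A) \<subseteq> Opt \<inter> A" using iA i unfolding Uy_def by auto
      ultimately have "Suc (\<mu> A) \<le> card (Opt \<inter> A)" using finA' by (metis card_mono finite_Int)
      moreover have "card (Opt \<inter> A) \<le> \<mu> A" using iO A(1) unfolding lam_indep_def by auto
      ultimately show False by simp
    next
      case 3 thus False using A yB by auto
    qed
  qed
  have "card J \<le> card I"
    by (rule maxl[of S I J]) (use BU XB iI iJ nI in \<open>auto simp: S_def I_def J_def\<close>)
  thus ?thesis unfolding I_def J_def .
qed

end



context lam begin

lemma tree:
  fixes T :: "'a set" and c :: real
  assumes c: "0 < c" "c < 1" and finT: "finite T"
    and tle: "\<forall>B\<in>F. card (T \<inter> B) \<le> \<mu> B"
    and mono: "\<forall>A\<in>F. \<forall>B\<in>F. A \<subset> B \<longrightarrow> \<mu> A < \<mu> B"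
  shows "B \<in> F \<Longrightarrow> T \<inter> B \<noteq> {} \<Longrightarrow>
     (\<Sum>B'\<in>{B'\<in>F. T \<inter> B' \<noteq> {} \<and> B' \<subseteq> B}. c^(\<mu> B' - card (T \<inter> B')) * (1 - c^(card (T \<inter> B'))))
       \<le> 2 * real (card (T \<inter> B)) - FF c (Suc (\<mu> B)) (card (T \<inter> B))"
proof (induction "card B" arbitrary: B rule: less_induct)
  case less
  define E where "E = (\<lambda>B'. c^(\<mu> B' - card (T \<inter> B')) * (1 - c^(card (T \<inter> B'))))"
  define t where "t = (\<lambda>B'. card (T \<inter> B'))"
  define Fp where "Fp = {B'\<in>F. T \<inter> B' \<noteq> {}}"
  define Dn where "Dn = (\<lambda>B. {B'\<in>F. T \<inter> B' \<noteq> {} \<and> B' \<subseteq> B})"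
  define Ch where "Ch = {C\<in>Fp. C \<subset> B \<and> (\<forall>C'\<in>Fp. C \<subseteq> C' \<and> C' \<subset> B \<longrightarrow> C' = C)}"
  have BF: "B \<in> F" using less.prems by simp
  have finFp: "finite Fp" using finF unfolding Fp_def by simp
  have finCh: "finite Ch" using finFp unfolding Ch_def by simp
  have ChF: "Ch \<subseteq> F" unfolding Ch_def Fp_def by auto
  have finDn: "\<And>X. finite (Dn X)" using finF unfolding Dn_def by simp
  have below: "\<forall>B'\<in>Dn B. B' \<noteq> B \<longrightarrow> (\<exists>C\<in>Ch. B' \<subseteq> C)"
  proof (intro ballI impI)
    fix B' assume B': "B' \<in> Dn B" "B' \<noteq> B"
    define Q where "Q = {C\<in>Fp. B' \<subseteq> C \<and> C \<subset> B}"
    have "B' \<in> Q" using B' unfolding Q_def Dn_def Fp_def by auto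
    moreover have "finite Q" using finFp unfolding Q_def by simp
    ultimately obtain C where C: "C \<in> Q" "\<forall>C'\<in>Q. card C' \<le> card C"
      using ex_max_card[of Q card] by blast
    have "C \<in> Ch"
      unfolding Ch_def
    proof (intro CollectI conjI ballI impI)
      show "C \<in> Fp" "C \<subset> B" using C unfolding Q_def by auto
    next
      fix C' assume C': "C' \<in> Fp" "C \<subseteq> C' \<and> C' \<subset> B"
      hence "C' \<in> Q" using C unfolding Q_def by auto
      hence "card C' \<le> card C" using C by auto
      moreover have "finite C'" using C' finA unfolding Fp_def by auto
      ultimately show "C' = C" using C' card_seteq by blast
    qed
    thus "\<exists>C\<in>Ch. B' \<subseteq> C" using C unfolding Q_def by auto
  qed
  have chdisj: "\<forall>C1\<in>Ch. \<forall>C2\<in>Ch. C1 \<noteq> C2 \<longrightarrow> C1 \<inter> C2 = {}"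
  proof (intro ballI impI)
    fix C1 C2 assume h: "C1 \<in> Ch" "C2 \<in> Ch" "C1 \<noteq> C2"
    from lamD[of C1 C2] h ChF consider "C1 \<subseteq> C2" | "C2 \<subseteq> C1" | "C1 \<inter> C2 = {}" by blast
    then show "C1 \<inter> C2 = {}"
    proof cases
      case 1 thus ?thesis using h unfolding Ch_def by auto
    next
      case 2 thus ?thesis using h unfolding Ch_def by auto
    qed
  qed
  have Dn_split: "Dn B = insert B (\<Union>C\<in>Ch. Dn C)"
  proof
    show "Dn B \<subseteq> insert B (\<Union>C\<in>Ch. Dn C)"
    proof
      fix B' assume h: "B' \<in> Dn B"
      show "B' \<in> insert B (\<Union>C\<in>Ch. Dn C)"
      proof (cases "B' = B")
        case False
        then obtain C where "C \<in> Ch" "B' \<subseteq> C" using below h by blast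
        thus ?thesis using h unfolding Dn_def by auto
      qed simp
    qed
  next
    show "insert B (\<Union>C\<in>Ch. Dn C) \<subseteq> Dn B"
      using less.prems unfolding Dn_def Ch_def by auto
  qed
  have Bnot: "B \<notin> (\<Union>C\<in>Ch. Dn C)" unfolding Dn_def Ch_def by auto
  have Dndisj: "\<forall>C1\<in>Ch. \<forall>C2\<in>Ch. C1 \<noteq> C2 \<longrightarrow> Dn C1 \<inter> Dn C2 = {}"
  proof (intro ballI impI)
    fix C1 C2 assume h: "C1 \<in> Ch" "C2 \<in> Ch" "C1 \<noteq> C2"
    show "Dn C1 \<inter> Dn C2 = {}"
    proof (rule ccontr)
      assume "Dn C1 \<inter> Dn C2 \<noteq> {}"
      then obtain X where "X \<in> Dn C1" "X \<in> Dn C2" by blast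
      hence "T \<inter> X \<noteq> {}" "X \<subseteq> C1" "X \<subseteq> C2" unfolding Dn_def by auto
      hence "C1 \<inter> C2 \<noteq> {}" by blast
      thus False using chdisj h by blast
    qed
  qed
  have sumsplit: "(\<Sum>B'\<in>Dn B. E B') = E B + (\<Sum>C\<in>Ch. \<Sum>B'\<in>Dn C. E B')"
  proof -
    have "(\<Sum>B'\<in>Dn B. E B') = E B + (\<Sum>B'\<in>(\<Union>C\<in>Ch. Dn C). E B')"
      unfolding Dn_split using Bnot finCh finDn by (subst sum.insert) auto
    also have "(\<Sum>B'\<in>(\<Union>C\<in>Ch. Dn C). E B') = (\<Sum>C\<in>Ch. \<Sum>B'\<in>Dn C. E B')"
      using finCh finDn Dndisj by (intro sum.UNION_disjoint) auto
    finally show ?thesis .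
  qed
  have tB: "t B \<le> \<mu> B" using tle BF unfolding t_def by auto
  have IHC: "\<forall>C\<in>Ch. (\<Sum>B'\<in>Dn C. E B') \<le> 2 * real (t C) - FF c (\<mu> B) (t C)"
  proof
    fix C assume C: "C \<in> Ch"
    have CB: "C \<subset> B" and CF: "C \<in> F" and CT: "T \<inter> C \<noteq> {}" using C unfolding Ch_def Fp_def by auto
    have "card C < card B" using CB finA[OF BF] by (simp add: psubset_card_mono)
    hence ih: "(\<Sum>B'\<in>Dn C. E B') \<le> 2 * real (t C) - FF c (Suc (\<mu> C)) (t C)"
      using less.hyps[of C] CF CT unfolding Dn_def E_def t_def by blast
    have "\<mu> C < \<mu> B" using mono CF BF CB by auto
    moreover have "t C \<le> \<mu> C" using tle CF unfolding t_def by auto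
    ultimately have "FF c (\<mu> B) (t C) \<le> FF c (Suc (\<mu> C)) (t C)"
      using FF_mono_nu[OF c] by simp
    thus "(\<Sum>B'\<in>Dn C. E B') \<le> 2 * real (t C) - FF c (\<mu> B) (t C)" using ih by simp
  qed
  have sumt: "(\<Sum>C\<in>Ch. t C) \<le> t B"
  proof -
    have "(\<Sum>C\<in>Ch. t C) = card (\<Union>C\<in>Ch. T \<inter> C)"
      unfolding t_def using finCh finT chdisj by (subst card_UN_disjoint) auto
    also have "\<dots> \<le> card (T \<inter> B)"
      using finT unfolding Ch_def by (intro card_mono) auto
    finally show ?thesis unfolding t_def .
  qed
  have step: "FF c (\<mu> B) (t B) \<le> 2 * (real (t B) - real (\<Sum>C\<in>Ch. t C)) + (\<Sum>C\<in>Ch. FF c (\<mu> B) (t C))"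
    using FF_step[OF c finCh sumt tB] .
  have EB: "E B = FF c (\<mu> B) (t B) - FF c (Suc (\<mu> B)) (t B)"
    using FF_diff[OF c tB] unfolding E_def t_def by simp
  have "(\<Sum>C\<in>Ch. \<Sum>B'\<in>Dn C. E B') \<le> (\<Sum>C\<in>Ch. 2 * real (t C) - FF c (\<mu> B) (t C))"
    using IHC by (intro sum_mono) auto
  also have "\<dots> = 2 * real (\<Sum>C\<in>Ch. t C) - (\<Sum>C\<in>Ch. FF c (\<mu> B) (t C))"
    by (simp add: sum_subtractf sum_distrib_left)
  finally have "(\<Sum>B'\<in>Dn B. E B') \<le> 2 * real (t B) - FF c (Suc (\<mu> B)) (t B)"
    using sumsplit step EB by (simp add: algebra_simps)
  thus ?case unfolding Dn_def E_def t_def .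
qed

end



lemma rank_sum:
  fixes w :: "'a \<Rightarrow> real"
  assumes fin: "finite S" and inj: "inj_on w S"
  shows "(\<Sum>i\<in>S. f (card {x\<in>S. w x < w i})) = (\<Sum>k<card S. f k)"
proof -
  define r where "r = (\<lambda>i. card {x\<in>S. w x < w i})"
  have rlt: "\<forall>i\<in>S. r i < card S"
  proof
    fix i assume i: "i \<in> S"
    have "{x\<in>S. w x < w i} \<subset> S" using i by auto
    thus "r i < card S" unfolding r_def using fin by (simp add: psubset_card_mono)
  qed
  have injr: "inj_on r S"
  proof (rule inj_onI)
    fix i j assume ij: "i \<in> S" "j \<in> S" "r i = r j"
    show "i = j"
    proof (rule ccontr)
      assume ne: "i \<noteq> j"
      hence "w i \<noteq> w j" using inj ij unfolding inj_on_def by auto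
      then consider "w i < w j" | "w j < w i" by linarith
      then show False
      proof cases
        case 1
        hence "{x\<in>S. w x < w i} \<subset> {x\<in>S. w x < w j}" using ij by auto
        hence "r i < r j" unfolding r_def using fin by (simp add: psubset_card_mono)
        thus False using ij by simp
      next
        case 2
        hence "{x\<in>S. w x < w j} \<subset> {x\<in>S. w x < w i}" using ij by auto
        hence "r j < r i" unfolding r_def using fin by (simp add: psubset_card_mono)
        thus False using ij by simp
      qed
    qed
  qed
  have img: "r ` S = {..<card S}"
  proof (rule card_subset_eq)
    show "finite {..<card S}" by simp
    show "r ` S \<subseteq> {..<card S}" using rlt by auto
    show "card (r ` S) = card {..<card S}" using card_image[OF injr] by simp
  qed
  have "(\<Sum>i\<in>S. f (r i)) = (\<Sum>k\<in>r ` S. f k)" using sum.reindex[OF injr, of f] by simp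
  also have "\<dots> = (\<Sum>k<card S. f k)" by (simp only: img)
  finally show ?thesis unfolding r_def .
qed

theorem lemma4:
  fixes U :: "'a set" and w :: "'a \<Rightarrow> real" and F :: "'a set set"
    and \<mu> :: "'a set \<Rightarrow> nat" and OPT :: "'a set \<Rightarrow> 'a set" and c :: real
  assumes finU: "finite U"
    and w_nonneg: "\<forall>x\<in>U. w x \<ge> 0"
    and w_distinct: "inj_on w U"
    and F_sub: "\<forall>A\<in>F. A \<subseteq> U"
    and F_lam: "laminar F"
    and U_in: "U \<in> F"
    and mu_pos: "\<forall>A\<in>F. \<mu> A > 0"
    and mu_mono: "\<forall>A\<in>F. \<forall>B\<in>F. A \<subset> B \<longrightarrow> \<mu> A < \<mu> B"
    and OPT_max: "\<forall>B\<in>F. is_max_indep F \<mu> w B (OPT B)"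
    and OPT_card: "\<forall>B\<in>F. card (OPT B) = \<mu> B"
    and c_pos: "0 < c" and c_lt: "c < 1/2"
  shows "(\<Sum>i\<in>OPT U. w i * (\<Sum>B\<in>members_containing F i. c ^ (1 + brank w OPT i B)))
           \<le> 2 * c / (1 - c) * wt w (OPT U)"
proof -
  interpret lam U F \<mu> using finU F_sub F_lam by unfold_locales
  have c: "0 < c" "c < 1" using c_pos c_lt by auto
  define Opt where "Opt = OPT U"
  define a where "a = (\<lambda>i. \<Sum>B\<in>members_containing F i. c ^ (1 + brank w OPT i B))"
  define K where "K = 2 * c / (1 - c)"
  have mxU: "is_max_indep F \<mu> w U Opt" using OPT_max U_in unfolding Opt_def by auto
  have cO: "card Opt = \<mu> U" using OPT_card U_in unfolding Opt_def by auto
  have OU: "Opt \<subseteq> U" and iO: "indep Opt" using mxU unfolding is_max_indep_def by auto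
  have finO: "finite Opt" using OU finU finite_subset by blast
  have thr: "\<forall>\<theta>. (\<Sum>i\<in>{i\<in>Opt. w i \<ge> \<theta>}. a i) \<le> K * card {i\<in>Opt. w i \<ge> \<theta>}"
  proof
    fix \<theta>
    define T where "T = {i\<in>Opt. w i \<ge> \<theta>}"
    define t where "t = (\<lambda>B. card (T \<inter> B))"
    define E where "E = (\<lambda>B. c^(\<mu> B - t B) * (1 - c^(t B)))"
    have finT: "finite T" using finO unfolding T_def by simp
    have TO: "T \<subseteq> Opt" unfolding T_def by auto
    have tle: "\<forall>B\<in>F. card (T \<inter> B) \<le> \<mu> B"
    proof
      fix B assume BF: "B \<in> F"
      have "card (T \<inter> B) \<le> card (Opt \<inter> B)" using TO finO by (intro card_mono) auto
      also have "\<dots> \<le> \<mu> B" using iO BF unfolding lam_indep_def by auto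
      finally show "card (T \<inter> B) \<le> \<mu> B" .
    qed
    have swap: "(\<Sum>i\<in>T. a i) = (\<Sum>B\<in>F. \<Sum>i\<in>T \<inter> B. c ^ (1 + brank w OPT i B))"
    proof -
      have "(\<Sum>i\<in>T. a i) = (\<Sum>i\<in>T. \<Sum>B\<in>F. if i \<in> B then c ^ (1 + brank w OPT i B) else 0)"
      proof (rule sum.cong[OF refl])
        fix i show "a i = (\<Sum>B\<in>F. if i \<in> B then c ^ (1 + brank w OPT i B) else 0)"
          unfolding a_def members_containing_def by (rule sum.inter_filter[OF finF])
      qed
      also have "\<dots> = (\<Sum>B\<in>F. \<Sum>i\<in>T. if i \<in> B then c ^ (1 + brank w OPT i B) else 0)"
        by (rule sum.swap)
      also have "\<dots> = (\<Sum>B\<in>F. \<Sum>i\<in>T \<inter> B. c ^ (1 + brank w OPT i B))"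
      proof (rule sum.cong[OF refl])
        fix B
        have "{i\<in>T. i \<in> B} = T \<inter> B" by auto
        thus "(\<Sum>i\<in>T. if i \<in> B then c ^ (1 + brank w OPT i B) else 0) = (\<Sum>i\<in>T \<inter> B. c ^ (1 + brank w OPT i B))"
          using finT sum.inter_filter[of T "\<lambda>i. c ^ (1 + brank w OPT i B)" "\<lambda>i. i \<in> B"] by simp
      qed
      finally show ?thesis .
    qed
    have perB: "\<forall>B\<in>F. (\<Sum>i\<in>T \<inter> B. c ^ (1 + brank w OPT i B)) \<le> c / (1 - c) * E B"
    proof
      fix B assume BF: "B \<in> F"
      define X where "X = OPT B"
      have mxB: "is_max_indep F \<mu> w B X" using OPT_max BF unfolding X_def by auto
      have cX: "card X = \<mu> B" using OPT_card BF unfolding X_def by auto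
      have XB: "X \<subseteq> B" using mxB unfolding is_max_indep_def by auto
      have finX: "finite X" using XB finA[OF BF] finite_subset by blast
      have finTB: "finite (T \<inter> B)" using finT by simp
      have injTB: "inj_on w (T \<inter> B)" using inj_on_subset[OF w_distinct, of "T \<inter> B"] TO OU by auto
      define r where "r = (\<lambda>i. card {x\<in>T \<inter> B. w x < w i})"
      have tB: "t B \<le> \<mu> B" using tle BF unfolding t_def by auto
      have bnd: "\<forall>i\<in>T \<inter> B. \<mu> B - t B + r i \<le> brank w OPT i B"
      proof
        fix i assume i: "i \<in> T \<inter> B"
        have iO': "i \<in> Opt" "i \<in> B" "w i \<ge> \<theta>" using i unfolding T_def by auto
        have ca: "card {x\<in>X. w x \<ge> w i} \<le> card {x\<in>Opt \<inter> B. w x \<ge> w i}"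
          using CA[OF U_in w_distinct mxU cO BF mxB cX iO'(1,2)] .
        have e1: "{x\<in>Opt \<inter> B. w x \<ge> w i} = {x\<in>T \<inter> B. w x \<ge> w i}"
          using iO'(3) unfolding T_def by auto
        have p1: "card X = card {x\<in>X. w x < w i} + card {x\<in>X. w x \<ge> w i}"
        proof -
          have "X = {x\<in>X. w x < w i} \<union> {x\<in>X. w x \<ge> w i}" by auto
          moreover have "{x\<in>X. w x < w i} \<inter> {x\<in>X. w x \<ge> w i} = {}" by auto
          ultimately show ?thesis using finX by (metis (no_types, lifting) card_Un_disjoint finite_Un)
        qed
        have p2: "t B = r i + card {x\<in>T \<inter> B. w x \<ge> w i}"
        proof -
          have "T \<inter> B = {x\<in>T \<inter> B. w x < w i} \<union> {x\<in>T \<inter> B. w x \<ge> w i}" by auto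
          moreover have "{x\<in>T \<inter> B. w x < w i} \<inter> {x\<in>T \<inter> B. w x \<ge> w i} = {}" by auto
          ultimately show ?thesis unfolding t_def r_def using finTB
            by (metis (no_types, lifting) card_Un_disjoint finite_Un)
        qed
        have "brank w OPT i B = card {x\<in>X. w x < w i}" unfolding brank_def X_def ..
        moreover have "card {x\<in>Opt \<inter> B. w x \<ge> w i} = card {x\<in>T \<inter> B. w x \<ge> w i}" using e1 by simp
        ultimately show "\<mu> B - t B + r i \<le> brank w OPT i B" using ca p1 p2 cX tB by linarith
      qed
      have "(\<Sum>i\<in>T \<inter> B. c ^ (1 + brank w OPT i B)) \<le> (\<Sum>i\<in>T \<inter> B. c ^ (1 + (\<mu> B - t B) + r i))"
      proof (rule sum_mono)
        fix i assume "i \<in> T \<inter> B"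
        hence "1 + (\<mu> B - t B) + r i \<le> 1 + brank w OPT i B" using bnd by auto
        thus "c ^ (1 + brank w OPT i B) \<le> c ^ (1 + (\<mu> B - t B) + r i)"
          using c by (intro power_decreasing) auto
      qed
      also have "\<dots> = (\<Sum>k<t B. c ^ (1 + (\<mu> B - t B) + k))"
        unfolding r_def using rank_sum[OF finTB injTB, of "\<lambda>k. c ^ (1 + (\<mu> B - t B) + k)"] by (simp add: t_def)
      also have "\<dots> = c ^ (1 + (\<mu> B - t B)) * (\<Sum>k<t B. c ^ k)"
        by (simp add: power_add sum_distrib_left mult.assoc)
      also have "\<dots> = c ^ (1 + (\<mu> B - t B)) * ((1 - c ^ t B) / (1 - c))"
        using c by (simp add: sum_gp_strict)
      also have "\<dots> = c / (1 - c) * E B" unfolding E_def by (simp add: power_add)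
      finally show "(\<Sum>i\<in>T \<inter> B. c ^ (1 + brank w OPT i B)) \<le> c / (1 - c) * E B" .
    qed
    have Esum: "(\<Sum>B\<in>F. E B) \<le> 2 * real (card T)"
    proof (cases "T = {}")
      case True
      hence "\<forall>B\<in>F. E B = 0" unfolding E_def t_def by simp
      thus ?thesis by simp
    next
      case False
      have UT: "T \<inter> U \<noteq> {}" using False TO OU by auto
      have tr: "(\<Sum>B'\<in>{B'\<in>F. T \<inter> B' \<noteq> {} \<and> B' \<subseteq> U}. c^(\<mu> B' - card (T \<inter> B')) * (1 - c^(card (T \<inter> B'))))
          \<le> 2 * real (card (T \<inter> U)) - FF c (Suc (\<mu> U)) (card (T \<inter> U))"
        using tree[OF c finT tle mu_mono U_in UT] .
      have "{B'\<in>F. T \<inter> B' \<noteq> {} \<and> B' \<subseteq> U} \<subseteq> F" by auto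
      moreover have "\<forall>B\<in>F - {B'\<in>F. T \<inter> B' \<noteq> {} \<and> B' \<subseteq> U}. E B = 0"
        unfolding E_def t_def using F_sub by auto
      ultimately have "(\<Sum>B\<in>F. E B) = (\<Sum>B\<in>{B'\<in>F. T \<inter> B' \<noteq> {} \<and> B' \<subseteq> U}. E B)"
        using finF by (intro sum.mono_neutral_right) auto
      also have "\<dots> \<le> 2 * real (card (T \<inter> U)) - FF c (Suc (\<mu> U)) (card (T \<inter> U))"
        using tr unfolding E_def t_def .
      also have "\<dots> \<le> 2 * real (card T)"
        using FF_nonneg[OF c] TO OU by (simp add: Int_absorb2)
      finally show ?thesis .
    qed
    have "(\<Sum>i\<in>T. a i) \<le> (\<Sum>B\<in>F. c / (1 - c) * E B)"
      unfolding swap using perB by (intro sum_mono) auto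
    also have "\<dots> = c / (1 - c) * (\<Sum>B\<in>F. E B)" by (simp add: sum_distrib_left)
    also have "\<dots> \<le> c / (1 - c) * (2 * real (card T))"
      using Esum c by (intro mult_left_mono) auto
    also have "\<dots> = K * card T" unfolding K_def by simp
    finally show "(\<Sum>i\<in>{i\<in>Opt. w i \<ge> \<theta>}. a i) \<le> K * card {i\<in>Opt. w i \<ge> \<theta>}"
      unfolding T_def .
  qed
  have injO: "inj_on w Opt" using w_distinct OU by (rule inj_on_subset)
  have nnO: "\<forall>x\<in>Opt. w x \<ge> 0" using w_nonneg OU by auto
  have "(\<Sum>i\<in>Opt. w i * a i) \<le> K * (\<Sum>i\<in>Opt. w i)"
    using abel[OF finO injO nnO thr] .
  thus ?thesis unfolding Opt_def a_def K_def wt_def .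
qed


end
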